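(* Let $\mathcal{P}$ be the class of unimodal probability measures on $\mathbb{R}$ that admit a smooth and bounded density. Then the mode functional $\Gamma_{\text{mode}}:\mathcal{P}\to\mathbb{R}$ is not identifiable with respect to $\mathcal{P}$: there is no function $V:\mathbb{R}\times\mathbb{R}\to\mathbb{R}$ such that for all $P\in\mathcal{P}$ and all $r\in\mathbb{R}$, $\Gamma_{\text{mode}}(P)=r$ if and only if $E_P V(r,Y)=0$.
   Context: Mode: for $P$ with distribution function $F$ and $\varepsilon>0$, a modal midpoint $\Gamma_\varepsilon(P)$ is any $x\in\arg\max_x\big(F(x+\varepsilon)-\lim_{z\uparrow x-\varepsilon}F(z)\big)$. If there is a sequence $\varepsilon_n\to0$ and a choice of modal midpoints $\Gamma_{\varepsilon_n}(P)$ converging to a real number, that limit is a mode of $P$ (for a continuous density it is the global maximizer of the density). $P$ is called unimodal if its mode is well-defined and unique; $\Gamma_{\text{mode}}(P)$ denotes this unique mode. $E_P V(r,Y)$ denotes the expectation of $V(r,Y)$ for $Y\sim P$. *)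

theory Defs
  imports "HOL-Probability.Probability"
begin

definition cdf_of :: "real measure \<Rightarrow> real \<Rightarrow> real" where
  "cdf_of M x = measure M {..x}"

definition modal_midpoint :: "real measure \<Rightarrow> real \<Rightarrow> real \<Rightarrow> bool" where
  "modal_midpoint M eps x \<longleftrightarrow>
     (\<forall>y. cdf_of M (y + eps) - Lim (at_left (y - eps)) (cdf_of M)
          \<le> cdf_of M (x + eps) - Lim (at_left (x - eps)) (cdf_of M))"

definition is_mode :: "real measure \<Rightarrow> real \<Rightarrow> bool" where
  "is_mode M m \<longleftrightarrow>
     (\<exists>eps x :: nat \<Rightarrow> real. (\<forall>n. eps n > 0) \<and> eps \<longlonglongrightarrow> 0 \<and>
        (\<forall>n. modal_midpoint M (eps n) (x n)) \<and> x \<longlonglongrightarrow> m)"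

definition unimodal :: "real measure \<Rightarrow> bool" where
  "unimodal M \<longleftrightarrow> (\<exists>!m. is_mode M m)"

definition mode :: "real measure \<Rightarrow> real" where
  "mode M = (THE m. is_mode M m)"

definition smooth :: "(real \<Rightarrow> real) \<Rightarrow> bool" where
  "smooth f \<longleftrightarrow> (\<forall>n x. (deriv ^^ n) f differentiable (at x))"

definition class_P :: "real measure set" where
  "class_P = {M. prob_space M \<and> sets M = sets borel \<and> unimodal M \<and>
     (\<exists>f. smooth f \<and> (\<forall>x. f x \<ge> 0) \<and> bounded (range f) \<and>
          M = density lborel (\<lambda>x. ennreal (f x)))}"

end

theory Submission
  imports Defs
begin


definition B :: "real poly \<Rightarrow> nat \<Rightarrow> real \<Rightarrow> real" where
  "B p k x = (if \<bar>x\<bar> < 1 then poly p x * (1 / (1 - x\<^sup>2)) ^ k * exp (- (1 / (1 - x\<^sup>2))) else 0)"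

definition Dp :: "real poly \<Rightarrow> nat \<Rightarrow> real poly" where
  "Dp p k = pderiv p * [:1,0,-1:]^2 + smult (2 * real k) ([:0,1:] * p * [:1,0,-1:]) - smult 2 ([:0,1:] * p)"

lemma g_lim: "((\<lambda>u::real. exp (- 1 / u) / u ^ m) \<longlongrightarrow> 0) (at_right 0)"
proof -
  have "((\<lambda>v::real. v ^ m / exp v) \<longlongrightarrow> 0) at_top" by (rule tendsto_power_div_exp_0)
  then have "((\<lambda>v::real. exp (- 1 / inverse v) / (inverse v) ^ m) \<longlongrightarrow> 0) at_top"
  proof (rule tendsto_cong[THEN iffD1, rotated])
    show "\<forall>\<^sub>F v::real in at_top. v ^ m / exp v = exp (- 1 / inverse v) / (inverse v) ^ m"
    proof (intro always_eventually allI)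
      fix v :: real
      show "v ^ m / exp v = exp (- 1 / inverse v) / (inverse v) ^ m"
        by (simp add: divide_inverse exp_minus' power_inverse)
    qed
  qed
  then show ?thesis by (rule filterlim_at_right_to_top[of "\<lambda>u::real. exp (- 1 / u) / u ^ m", THEN iffD2])
qed

lemma du_aux: assumes q: "1 - x\<^sup>2 > (0::real)"
  shows "((\<lambda>x. 1 / (1 - x\<^sup>2)) has_real_derivative 2 * x * (1 / (1 - x\<^sup>2))\<^sup>2) (at x)"
proof -
  have a: "((\<lambda>x. 1 - x\<^sup>2) has_real_derivative -(2*x)) (at x)"
    by (auto intro!: derivative_eq_intros)
  have "((\<lambda>x. inverse (1 - x\<^sup>2)) has_real_derivative 2*x * (inverse (1 - x\<^sup>2))\<^sup>2) (at x)"
    using DERIV_inverse_fun[OF a] q by (simp add: power2_eq_square)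
  then show ?thesis by (simp add: divide_inverse power_inverse)
qed

lemma alg_aux: assumes qU: "(1 - x\<^sup>2) * U = (1::real)"
  shows "(a * U ^ k + real k * (2 * x) * U ^ (k + 1) * b) * E + E * (- (2 * x * U\<^sup>2)) * (b * U ^ k)
     = (a * (1 - x\<^sup>2)\<^sup>2 + 2 * real k * x * b * (1 - x\<^sup>2) - 2 * x * b) * U ^ (k + 2) * E"
proof -
  have "(a * (1 - x\<^sup>2)\<^sup>2 + 2 * real k * x * b * (1 - x\<^sup>2) - 2 * x * b) * U ^ (k + 2) * E
    = (a * ((1 - x\<^sup>2) * U)\<^sup>2 + 2 * real k * x * b * ((1 - x\<^sup>2) * U) * U - 2 * x * b * U\<^sup>2) * U ^ k * E"
    by (simp add: power2_eq_square algebra_simps)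
  also have "\<dots> = (a + 2 * real k * x * b * U - 2 * x * b * U\<^sup>2) * U ^ k * E" using qU by simp
  finally show ?thesis by (simp add: power2_eq_square algebra_simps)
qed

lemma pow_aux: "real k * U ^ (k - Suc 0) * (c * U\<^sup>2) = real k * c * U ^ (k + 1)"
  by (cases k) (simp_all add: power2_eq_square)

lemma B_deriv_inside:
  assumes "\<bar>x\<bar> < 1"
  shows "(B p k has_real_derivative B (Dp p k) (k+2) x) (at x)"
proof -
  have q: "1 - x\<^sup>2 > 0" using assms by (simp add: abs_square_less_1)
  define U where "U = 1 / (1 - x\<^sup>2)"
  have qU: "(1 - x\<^sup>2) * U = 1" using q by (simp add: U_def)
  have du: "((\<lambda>x. 1 / (1 - x\<^sup>2)) has_real_derivative 2 * x * U\<^sup>2) (at x)"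
    using du_aux[OF q] by (simp add: U_def)
  have dpow: "((\<lambda>x. (1 / (1 - x\<^sup>2)) ^ k) has_real_derivative real k * (2 * x) * U ^ (k + 1)) (at x)"
  proof -
    have e: "of_nat k * (2 * x * U\<^sup>2 * (1 / (1 - x\<^sup>2)) ^ (k - Suc 0)) = real k * (2 * x) * U ^ (k + 1)"
      by (cases k) (simp_all add: U_def power2_eq_square)
    show ?thesis using DERIV_power[OF du, of k] unfolding e .
  qed
  have dexp: "((\<lambda>x. exp (- (1 / (1 - x\<^sup>2)))) has_real_derivative exp (- U) * (- (2 * x * U\<^sup>2))) (at x)"
    using DERIV_chain2[OF DERIV_exp DERIV_minus[OF du]] by (simp add: U_def)
  have d: "((\<lambda>x. poly p x * (1 / (1 - x\<^sup>2)) ^ k * exp (- (1 / (1 - x\<^sup>2)))) has_real_derivative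
     (poly (pderiv p) x * U ^ k + real k * (2 * x) * U ^ (k + 1) * poly p x) * exp (- U) + exp (- U) * (- (2 * x * U\<^sup>2)) * (poly p x * U ^ k)) (at x)"
    using DERIV_mult[OF DERIV_mult[OF poly_DERIV dpow] dexp] by (simp add: U_def)
  have eq: "(poly (pderiv p) x * U ^ k + real k * (2 * x) * U ^ (k + 1) * poly p x) * exp (- U) + exp (- U) * (- (2 * x * U\<^sup>2)) * (poly p x * U ^ k)
     = B (Dp p k) (k+2) x"
  proof -
    have "B (Dp p k) (k+2) x = poly (Dp p k) x * U ^ (k + 2) * exp (- U)"
      using assms by (simp add: B_def U_def)
    also have "poly (Dp p k) x = poly (pderiv p) x * (1 - x\<^sup>2)\<^sup>2 + 2 * real k * x * poly p x * (1 - x\<^sup>2) - 2 * x * poly p x"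
      by (simp add: Dp_def power2_eq_square algebra_simps)
    finally show ?thesis using alg_aux[OF qU] by simp
  qed
  have "((\<lambda>x. poly p x * (1 / (1 - x\<^sup>2)) ^ k * exp (- (1 / (1 - x\<^sup>2)))) has_real_derivative B (Dp p k) (k+2) x) (at x)"
    unfolding eq[symmetric] by (rule d)
  then show ?thesis
    apply (rule has_field_derivative_transform_within_open[where S="{-1<..<1}"])
    using assms by (auto simp: B_def abs_less_iff)
qed


definition gk :: "nat \<Rightarrow> real \<Rightarrow> real" where
  "gk m u = (if u > 0 then exp (- 1 / u) / u ^ m else 0)"

lemma gk_cont: "isCont (gk m) 0"
proof -
  have r: "(gk m \<longlongrightarrow> 0) (at_right 0)"
  proof (rule tendsto_cong[THEN iffD1, OF _ g_lim[of m]])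
    show "\<forall>\<^sub>F x in at_right 0. exp (- 1 / x) / x ^ m = gk m x"
      by (simp add: eventually_at_right_less gk_def eventually_mono[OF eventually_at_right_less])
  qed
  have l: "(gk m \<longlongrightarrow> 0) (at_left 0)"
  proof (rule tendsto_cong[THEN iffD1, OF _ tendsto_const])
    show "\<forall>\<^sub>F x in at_left 0. 0 = gk m x"
      using eventually_at_left_real[of "-1" "0::real"] by (rule eventually_mono) (auto simp: gk_def)
  qed
  have "(gk m \<longlongrightarrow> 0) (at 0)" using l r by (rule filterlim_split_at_real)
  then show ?thesis by (simp add: isCont_def gk_def)
qed

lemma s1: "(u::real) > 0 \<Longrightarrow> C * (1/u)^k * exp (- (1/u)) / (u / 2) = 2 * C * (exp (- 1 / u) / u ^ (k+1))"
  by (simp add: power_one_over field_simps)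
lemma s2: "(u::real) > 0 \<Longrightarrow> u \<le> 2 * d \<Longrightarrow> a \<le> C \<Longrightarrow> 0 \<le> a \<Longrightarrow> a * (1/u)^k * E / d \<le> C * (1/u)^k * E / (u / 2)" if "E \<ge> 0"
  using that by (intro frac_le mult_right_mono mult_nonneg_nonneg) auto

lemma B_deriv_bd:
  assumes x: "\<bar>x\<bar> = 1"
  shows "(B p k has_real_derivative 0) (at x)"
proof -
  obtain C where C: "\<And>y. y \<in> {-1..1} \<Longrightarrow> \<bar>poly p y\<bar> \<le> C"
  proof -
    have "compact (poly p ` {-1..1::real})"
      by (rule compact_continuous_image) (auto intro!: continuous_intros)
    then obtain C where "\<forall>z \<in> poly p ` {-1..1::real}. norm z \<le> C"
      using compact_imp_bounded bounded_iff by metis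
    then show ?thesis using that[of C] by auto
  qed
  have C0: "C \<ge> 0" using C[of 0] by auto
  have Bx: "B p k x = 0" using x by (simp add: B_def)
  have lim: "((\<lambda>y. 2 * C * gk (k+1) (1 - y\<^sup>2)) \<longlongrightarrow> 0) (at x)"
  proof -
    have "((\<lambda>y. 1 - y\<^sup>2) \<longlongrightarrow> 0) (at x)"
    proof -
      have "((\<lambda>y. 1 - y\<^sup>2) \<longlongrightarrow> 1 - x\<^sup>2) (at x)" by (intro tendsto_intros)
      moreover have "1 - x\<^sup>2 = 0" using x by (cases "x = 1") (auto simp: abs_if split: if_splits)
      ultimately show ?thesis by simp
    qed
    from isCont_tendsto_compose[OF gk_cont this]
    have "((\<lambda>y. gk (k+1) (1 - y\<^sup>2)) \<longlongrightarrow> 0) (at x)" by (simp add: gk_def)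
    then show ?thesis by (intro tendsto_eq_intros) auto
  qed
  have ev: "\<forall>\<^sub>F y in at x. norm ((B p k y - B p k x) / (y - x)) \<le> 2 * C * gk (k+1) (1 - y\<^sup>2)"
  proof -
    have "\<forall>\<^sub>F y in at x. y \<noteq> x" by (rule eventually_at_filter[THEN iffD2]) simp
    then show ?thesis
    proof (rule eventually_mono)
      fix y assume yx: "y \<noteq> x"
      show "norm ((B p k y - B p k x) / (y - x)) \<le> 2 * C * gk (k+1) (1 - y\<^sup>2)"
      proof (cases "\<bar>y\<bar> < 1")
        case False
        then have "B p k y = 0" by (simp add: B_def)
        moreover have "gk (k+1) (1 - y\<^sup>2) \<ge> 0" by (simp add: gk_def)
        ultimately show ?thesis using Bx C0 by simp
      next
        case True
        define u where "u = 1 - y\<^sup>2"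
        have u0: "u > 0" using True by (simp add: u_def abs_square_less_1)
        have u1: "u \<le> 2 * \<bar>y - x\<bar>"
        proof (cases "x = 1")
          case True
          have "u = (1 - y) * (1 + y)" by (simp add: u_def power2_eq_square algebra_simps)
          also have "\<dots> \<le> (1 - y) * 2" using \<open>\<bar>y\<bar> < 1\<close> by (intro mult_left_mono) auto
          finally show ?thesis using True \<open>\<bar>y\<bar> < 1\<close> by simp
        next
          case False
          then have "x = -1" using x by auto
          have "u = (1 + y) * (1 - y)" by (simp add: u_def power2_eq_square algebra_simps)
          also have "\<dots> \<le> (1 + y) * 2" using \<open>\<bar>y\<bar> < 1\<close> by (intro mult_left_mono) auto
          finally show ?thesis using \<open>x = -1\<close> \<open>\<bar>y\<bar> < 1\<close> by simp
        qed
        have py: "\<bar>poly p y\<bar> \<le> C" using C[of y] True by (auto simp: abs_less_iff)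
        have "norm ((B p k y - B p k x) / (y - x)) = \<bar>poly p y\<bar> * (1/u)^k * exp (- (1/u)) / \<bar>y - x\<bar>"
          using True Bx u0 by (simp add: B_def u_def abs_mult abs_of_pos)
        also have "\<dots> \<le> C * (1/u)^k * exp (- (1/u)) / (u / 2)"
          using s2[OF exp_ge_zero u0 u1 py abs_ge_zero] .
        also have "\<dots> = 2 * C * gk (k+1) (1 - y\<^sup>2)"
          using s1[OF u0] u0 by (simp add: gk_def u_def[symmetric])
        finally show ?thesis .
      qed
    qed
  qed
  show ?thesis
    unfolding has_field_derivative_iff
    by (rule Lim_null_comparison[OF ev lim])
qed


lemma B_deriv: "(B p k has_real_derivative B (Dp p k) (k+2) x) (at x)"
proof -
  consider "\<bar>x\<bar> < 1" | "\<bar>x\<bar> = 1" | "\<bar>x\<bar> > 1" by linarith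
  then show ?thesis
  proof cases
    case 1 then show ?thesis by (rule B_deriv_inside)
  next
    case 2
    then have "B (Dp p k) (k+2) x = 0" by (simp add: B_def)
    then show ?thesis using B_deriv_bd[OF 2] by simp
  next
    case 3
    then have e: "B (Dp p k) (k+2) x = 0" by (simp add: B_def)
    have "((\<lambda>x. 0) has_real_derivative 0) (at x)" by simp
    then have "(B p k has_real_derivative 0) (at x)"
      by (rule has_field_derivative_transform_within_open[where S="{y. 1 < \<bar>y\<bar>}"])
         (use 3 in \<open>auto simp: B_def intro!: open_Collect_less continuous_intros\<close>)
    then show ?thesis using e by simp
  qed
qed

lemma deriv_B: "deriv (B p k) = B (Dp p k) (k+2)"
  by (rule ext, rule DERIV_imp_deriv, rule B_deriv)

lemma derivs_B: "\<exists>p' k'. (deriv ^^ n) (B p k) = B p' k'"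
proof (induction n)
  case 0 then show ?case by auto
next
  case (Suc n)
  then obtain p' k' where "(deriv ^^ n) (B p k) = B p' k'" by blast
  then show ?case by (auto simp: deriv_B)
qed

lemma smooth_B: "smooth (B p k)"
  unfolding smooth_def
proof (intro allI)
  fix n x
  obtain p' k' where "(deriv ^^ n) (B p k) = B p' k'" using derivs_B by blast
  then show "(deriv ^^ n) (B p k) differentiable (at x)"
    using B_deriv real_differentiable_def by metis
qed

lemma smooth_diff: "smooth f \<Longrightarrow> f differentiable (at x)"
  unfolding smooth_def by (metis funpow_0)

lemma smooth_deriv: "smooth f \<Longrightarrow> smooth (deriv f)"
  unfolding smooth_def by (metis funpow_Suc_right o_apply)

lemma deriv_shift: fixes f :: "real \<Rightarrow> real" assumes "\<And>x. f differentiable (at x)"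
  shows "deriv (\<lambda>x. f (x - c)) = (\<lambda>x. deriv f (x - c))"
proof (rule ext, rule DERIV_imp_deriv)
  fix x
  have "(f has_real_derivative deriv f (x - c)) (at (x - c))"
    using assms DERIV_deriv_iff_real_differentiable by blast
  moreover have "((\<lambda>x. x - c) has_real_derivative 1) (at x)" by (auto intro!: derivative_eq_intros)
  ultimately show "((\<lambda>x. f (x - c)) has_real_derivative deriv f (x - c)) (at x)"
    using DERIV_chain2[of f "deriv f (x - c)" "\<lambda>x. x - c" x 1] by simp
qed

lemma deriv_lin: fixes f g :: "real \<Rightarrow> real" assumes "\<And>x. f differentiable (at x)" "\<And>x. g differentiable (at x)"
  shows "deriv (\<lambda>x. a * f x + b * g x) = (\<lambda>x. a * deriv f x + b * deriv g x)"
proof (rule ext, rule DERIV_imp_deriv)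
  fix x
  have "(f has_real_derivative deriv f x) (at x)" "(g has_real_derivative deriv g x) (at x)"
    using assms DERIV_deriv_iff_real_differentiable by blast+
  then show "((\<lambda>x. a * f x + b * g x) has_real_derivative a * deriv f x + b * deriv g x) (at x)"
    by (auto intro!: derivative_eq_intros)
qed

lemma derivs_shift: "smooth f \<Longrightarrow> (deriv ^^ n) (\<lambda>x. f (x - c)) = (\<lambda>x. (deriv ^^ n) f (x - c))"
proof (induction n arbitrary: f)
  case 0 then show ?case by simp
next
  case (Suc n)
  have "(deriv ^^ Suc n) (\<lambda>x. f (x - c)) = (deriv ^^ n) (deriv (\<lambda>x. f (x - c)))"
    by (simp add: funpow_Suc_right del: funpow.simps)
  also have "deriv (\<lambda>x. f (x - c)) = (\<lambda>x. deriv f (x - c))"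
    using deriv_shift smooth_diff[OF Suc.prems] by blast
  also have "(deriv ^^ n) (\<lambda>x. deriv f (x - c)) = (\<lambda>x. (deriv ^^ n) (deriv f) (x - c))"
    using Suc.IH smooth_deriv[OF Suc.prems] by blast
  finally show ?case by (simp add: funpow_Suc_right del: funpow.simps)
qed

lemma derivs_lin: "smooth f \<Longrightarrow> smooth g \<Longrightarrow>
  (deriv ^^ n) (\<lambda>x. a * f x + b * g x) = (\<lambda>x. a * (deriv ^^ n) f x + b * (deriv ^^ n) g x)"
proof (induction n arbitrary: f g)
  case 0 then show ?case by simp
next
  case (Suc n)
  have "(deriv ^^ Suc n) (\<lambda>x. a * f x + b * g x) = (deriv ^^ n) (deriv (\<lambda>x. a * f x + b * g x))"
    by (simp add: funpow_Suc_right del: funpow.simps)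
  also have "deriv (\<lambda>x. a * f x + b * g x) = (\<lambda>x. a * deriv f x + b * deriv g x)"
    using deriv_lin smooth_diff[OF Suc.prems(1)] smooth_diff[OF Suc.prems(2)] by blast
  also have "(deriv ^^ n) (\<lambda>x. a * deriv f x + b * deriv g x) = (\<lambda>x. a * (deriv ^^ n) (deriv f) x + b * (deriv ^^ n) (deriv g) x)"
    using Suc.IH smooth_deriv[OF Suc.prems(1)] smooth_deriv[OF Suc.prems(2)] by blast
  finally show ?case by (simp add: funpow_Suc_right del: funpow.simps)
qed

lemma smooth_shift: assumes "smooth f" shows "smooth (\<lambda>x. f (x - c))"
  unfolding smooth_def
proof (intro allI)
  fix n x
  have "(deriv ^^ n) f differentiable (at (x - c))" using assms by (simp add: smooth_def)
  then have "((deriv ^^ n) f has_real_derivative deriv ((deriv ^^ n) f) (x - c)) (at (x - c))"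
    using DERIV_deriv_iff_real_differentiable by blast
  moreover have "((\<lambda>x. x - c) has_real_derivative 1) (at x)" by (auto intro!: derivative_eq_intros)
  ultimately have "((\<lambda>x. (deriv ^^ n) f (x - c)) has_real_derivative deriv ((deriv ^^ n) f) (x - c) * 1) (at x)"
    by (rule DERIV_chain2)
  then have "(\<lambda>x. (deriv ^^ n) f (x - c)) differentiable (at x)"
    using real_differentiable_def by blast
  then show "(deriv ^^ n) (\<lambda>x. f (x - c)) differentiable (at x)" using derivs_shift[OF assms] by simp
qed

lemma smooth_lin: assumes "smooth f" "smooth g" shows "smooth (\<lambda>x. a * f x + b * g x)"
  unfolding smooth_def
proof (intro allI)
  fix n x
  have "(deriv ^^ n) f differentiable (at x)" "(deriv ^^ n) g differentiable (at x)"
    using assms by (simp_all add: smooth_def)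
  then have "((deriv ^^ n) f has_real_derivative deriv ((deriv ^^ n) f) x) (at x)"
     "((deriv ^^ n) g has_real_derivative deriv ((deriv ^^ n) g) x) (at x)"
    using DERIV_deriv_iff_real_differentiable by blast+
  then have "((\<lambda>x. a * (deriv ^^ n) f x + b * (deriv ^^ n) g x) has_real_derivative
      a * deriv ((deriv ^^ n) f) x + b * deriv ((deriv ^^ n) g) x) (at x)"
    by (auto intro!: derivative_eq_intros)
  then have "(\<lambda>x. a * (deriv ^^ n) f x + b * (deriv ^^ n) g x) differentiable (at x)"
    using real_differentiable_def by blast
  then show "(deriv ^^ n) (\<lambda>x. a * f x + b * g x) differentiable (at x)" using derivs_lin[OF assms] by simp
qed

context
  fixes f :: "real \<Rightarrow> real" and lo hi :: real
  assumes fcont: "\<And>x. isCont f x"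
    and fnn: "\<And>x. f x \<ge> 0"
    and fsupp: "\<And>x. x < lo \<or> hi < x \<Longrightarrow> f x = 0"
    and fint: "integrable lborel f"
    and f1: "integral\<^sup>L lborel f = 1"
begin

abbreviation "Mf \<equiv> density lborel (\<lambda>x. ennreal (f x))"

lemma f_meas[measurable]: "f \<in> borel_measurable borel"
  using borel_measurable_integrable[OF fint] by simp

lemma int_ind: "A \<in> sets borel \<Longrightarrow> integrable lborel (\<lambda>x. indicator A x * f x)"
  using integrable_mult_indicator[of A lborel f] fint by simp

lemma emeasure_Mf: assumes "A \<in> sets borel"
  shows "emeasure Mf A = ennreal (\<integral>x. indicator A x * f x \<partial>lborel)"
proof -
  have "emeasure Mf A = (\<integral>\<^sup>+ x. ennreal (f x) * indicator A x \<partial>lborel)"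
    using assms by (subst emeasure_density) auto
  also have "\<dots> = (\<integral>\<^sup>+ x. ennreal (indicator A x * f x) \<partial>lborel)"
    by (intro nn_integral_cong) (auto split: split_indicator)
  also have "\<dots> = ennreal (\<integral>x. indicator A x * f x \<partial>lborel)"
    using int_ind[OF assms] fnn by (intro nn_integral_eq_integral) auto
  finally show ?thesis .
qed

lemma measure_Mf: assumes "A \<in> sets borel"
  shows "measure Mf A = (\<integral>x. indicator A x * f x \<partial>lborel)"
proof -
  have "(\<integral>x. indicator A x * f x \<partial>lborel) \<ge> 0"
    using fnn by (intro integral_nonneg_AE) auto
  then show ?thesis using emeasure_Mf[OF assms] by (simp add: measure_def)
qed

lemma prob_Mf: "prob_space Mf"
proof
  have "emeasure Mf (space Mf) = emeasure Mf UNIV" by simp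
  also have "\<dots> = ennreal (\<integral>x. indicator UNIV x * f x \<partial>lborel)" by (rule emeasure_Mf) simp
  also have "\<dots> = 1" using f1 by simp
  finally show "emeasure Mf (space Mf) = 1" .
qed

lemma sets_Mf: "sets Mf = sets borel" by simp

lemma real_distr_Mf: "real_distribution Mf"
  using prob_Mf by (simp add: real_distribution_def real_distribution_axioms_def)

lemma Mf_single: "measure Mf {x} = 0"
proof -
  have "AE y in lborel. indicator {x} y * f y = 0"
    using AE_lborel_singleton[of x] by eventually_elim (auto split: split_indicator)
  then have "(\<integral>y. indicator {x} y * f y \<partial>lborel) = 0" by (rule integral_eq_zero_AE)
  then show ?thesis by (simp add: measure_Mf)
qed

lemma cdf_cont: "isCont (cdf_of Mf) x"
proof -
  interpret real_distribution Mf by (rule real_distr_Mf)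
  have "isCont (cdf Mf) x" using isCont_cdf Mf_single by simp
  moreover have "cdf Mf = cdf_of Mf" by (rule ext) (simp add: cdf_def cdf_of_def)
  ultimately show ?thesis by simp
qed

lemma Lim_cdf: "Lim (at_left x) (cdf_of Mf) = cdf_of Mf x"
proof (rule tendsto_Lim)
  show "\<not> trivial_limit (at_left x)" by simp
  show "(cdf_of Mf \<longlongrightarrow> cdf_of Mf x) (at_left x)"
    using cdf_cont[of x] by (simp add: isCont_def filterlim_at_split)
qed

lemma cdf_diff: assumes "a \<le> b" shows "cdf_of Mf b - cdf_of Mf a = (\<integral>x. indicator {a<..b} x * f x \<partial>lborel)"
proof (cases "a < b")
  case True
  interpret real_distribution Mf by (rule real_distr_Mf)
  have "cdf Mf b - cdf Mf a = measure Mf {a<..b}" using cdf_diff_eq[OF True] .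
  then show ?thesis by (simp add: cdf_def cdf_of_def measure_Mf)
next
  case False
  then show ?thesis using assms by simp
qed

lemma int_upper: assumes "a \<le> b" "\<And>x. x \<in> {a<..b} \<Longrightarrow> f x \<le> s"
  shows "(\<integral>x. indicator {a<..b} x * f x \<partial>lborel) \<le> s * (b - a)"
proof -
  have "(\<integral>x. indicator {a<..b} x * f x \<partial>lborel) \<le> (\<integral>x. indicator {a<..b} x * s \<partial>lborel)"
    using assms by (intro integral_mono int_ind integrable_mult_left integrable_real_indicator) (auto split: split_indicator)
  also have "\<dots> = s * (b - a)" using assms(1) by (simp add: emeasure_lborel_Ioc)
  finally show ?thesis .
qed

lemma int_lower: assumes "a \<le> b" "\<And>x. x \<in> {a<..b} \<Longrightarrow> s \<le> f x"
  shows "s * (b - a) \<le> (\<integral>x. indicator {a<..b} x * f x \<partial>lborel)"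
proof -
  have "s * (b - a) = (\<integral>x. indicator {a<..b} x * s \<partial>lborel)" using assms(1) by (simp add: emeasure_lborel_Ioc)
  also have "\<dots> \<le> (\<integral>x. indicator {a<..b} x * f x \<partial>lborel)"
    using assms by (intro integral_mono int_ind integrable_mult_left integrable_real_indicator) (auto split: split_indicator)
  finally show ?thesis .
qed


definition "Gf eps y = (\<integral>x. indicator {y - eps<..y + eps} x * f x \<partial>lborel)"

lemma G_eq: assumes "eps > 0"
  shows "cdf_of Mf (y + eps) - Lim (at_left (y - eps)) (cdf_of Mf) = Gf eps y"
  using cdf_diff[of "y - eps" "y + eps"] assms by (simp add: Lim_cdf Gf_def)

lemma mm_iff: assumes "eps > 0" shows "modal_midpoint Mf eps x \<longleftrightarrow> (\<forall>y. Gf eps y \<le> Gf eps x)"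
  using G_eq[OF assms] by (simp add: modal_midpoint_def)

lemma Gf_nonneg: "Gf eps y \<ge> 0"
  unfolding Gf_def using fnn by (intro integral_nonneg_AE) (auto split: split_indicator)

lemma mm_exists: assumes "eps > 0" "lo \<le> hi" shows "\<exists>x. modal_midpoint Mf eps x"
proof -
  let ?S = "{lo - eps..hi + eps}"
  have cG: "continuous_on ?S (\<lambda>y. cdf_of Mf (y + eps) - cdf_of Mf (y - eps))"
  proof (intro continuous_at_imp_continuous_on ballI)
    fix y
    have "isCont (\<lambda>y. cdf_of Mf (y + eps)) y"
      by (rule continuous_at_compose[where f="\<lambda>y. y + eps", unfolded o_def]) (auto intro!: continuous_intros cdf_cont)
    moreover have "isCont (\<lambda>y. cdf_of Mf (y - eps)) y"
      by (rule continuous_at_compose[where f="\<lambda>y. y - eps", unfolded o_def]) (auto intro!: continuous_intros cdf_cont)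
    ultimately show "isCont (\<lambda>y. cdf_of Mf (y + eps) - cdf_of Mf (y - eps)) y"
      by (intro continuous_intros)
  qed
  have eqG: "\<And>y. cdf_of Mf (y + eps) - cdf_of Mf (y - eps) = Gf eps y"
    using G_eq[OF assms(1)] Lim_cdf by simp
  have "\<exists>x\<in>?S. \<forall>y\<in>?S. Gf eps y \<le> Gf eps x"
    using continuous_attains_sup[OF compact_Icc _ cG] assms unfolding eqG by auto
  then obtain x where x: "\<forall>y\<in>?S. Gf eps y \<le> Gf eps x" by blast
  have "Gf eps y \<le> Gf eps x" for y
  proof (cases "y \<in> ?S")
    case True then show ?thesis using x by blast
  next
    case False
    have "Gf eps y \<le> 0 * ((y + eps) - (y - eps))"
      unfolding Gf_def
    proof (intro int_upper)
      show "y - eps \<le> y + eps" using assms by simp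
      fix z assume z: "z \<in> {y - eps<..y + eps}"
      have "z < lo \<or> hi < z" using z False by auto
      then show "f z \<le> 0" using fsupp by simp
    qed
    then show ?thesis using Gf_nonneg[of eps x] by simp
  qed
  then show ?thesis using mm_iff[OF assms(1)] by blast
qed

lemma sep_lemma:
  assumes sep: "\<And>d. d > 0 \<Longrightarrow> \<exists>s<f m. \<forall>x. \<bar>x - m\<bar> \<ge> d \<longrightarrow> f x \<le> s" and "delta > 0"
  shows "\<exists>e0>0. \<forall>eps. 0 < eps \<and> eps < e0 \<longrightarrow> (\<forall>y. \<bar>y - m\<bar> \<ge> delta \<longrightarrow> Gf eps y < Gf eps m)"
proof -
  obtain s where s: "s < f m" "\<And>x. \<bar>x - m\<bar> \<ge> delta / 2 \<Longrightarrow> f x \<le> s"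
    using sep[of "delta / 2"] assms(2) by auto
  obtain d where d: "d > 0" "\<And>x. x \<noteq> m \<and> norm (x - m) < d \<Longrightarrow> norm (f x - f m) < (f m - s) / 2"
    using LIM_D[OF fcont[of m, unfolded isCont_def], of "(f m - s) / 2"] s(1) by auto
  have d2: "f x > (f m + s) / 2" if "\<bar>x - m\<bar> < d" for x
  proof (cases "x = m")
    case True then show ?thesis using s(1) by simp
  next
    case False
    then have "\<bar>f x - f m\<bar> < (f m - s) / 2" using d(2)[of x] that by simp
    then show ?thesis unfolding abs_less_iff by (simp add: field_simps)
  qed
  show ?thesis
  proof (intro exI[of _ "min d (delta / 2)"] conjI allI impI)
    show "min d (delta / 2) > 0" using d assms by simp
    fix eps y assume e: "0 < eps \<and> eps < min d (delta / 2)" and y: "\<bar>y - m\<bar> \<ge> delta"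
    have "Gf eps y \<le> s * ((y + eps) - (y - eps))"
      unfolding Gf_def
    proof (intro int_upper s(2))
      show "y - eps \<le> y + eps" using e by simp
      fix z assume z: "z \<in> {y - eps<..y + eps}"
      then have "\<bar>z - y\<bar> \<le> eps" by auto
      then show "\<bar>z - m\<bar> \<ge> delta / 2" using y e by linarith
    qed
    also have "\<dots> < (f m + s) / 2 * ((m + eps) - (m - eps))"
      using e s(1) by (simp add: field_simps)
    also have "\<dots> \<le> Gf eps m"
      unfolding Gf_def
    proof (intro int_lower less_imp_le[OF d2])
      show "m - eps \<le> m + eps" using e by simp
      fix z assume z: "z \<in> {m - eps<..m + eps}"
      then have "\<bar>z - m\<bar> \<le> eps" by auto
      then show "\<bar>z - m\<bar> < d" using e by linarith
    qed
    finally show "Gf eps y < Gf eps m" .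
  qed
qed

lemma conv_lemma:
  assumes sep: "\<And>d. d > 0 \<Longrightarrow> \<exists>s<f m. \<forall>x. \<bar>x - m\<bar> \<ge> d \<longrightarrow> f x \<le> s"
    and epos: "\<And>n. eps n > 0" and elim: "eps \<longlonglongrightarrow> 0"
    and mm: "\<And>n. modal_midpoint Mf (eps n) (x n)"
  shows "x \<longlonglongrightarrow> m"
proof (rule tendstoI)
  fix delta :: real assume dpos: "delta > 0"
  obtain e0 where e0: "e0 > 0" "\<forall>eps. 0 < eps \<and> eps < e0 \<longrightarrow> (\<forall>y. \<bar>y - m\<bar> \<ge> delta \<longrightarrow> Gf eps y < Gf eps m)"
    using sep_lemma[OF sep dpos] by blast
  have "\<forall>\<^sub>F n in sequentially. eps n < e0" using order_tendstoD(2)[OF elim e0(1)] .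
  then show "\<forall>\<^sub>F n in sequentially. dist (x n) m < delta"
  proof (rule eventually_mono)
    fix n assume n: "eps n < e0"
    have "Gf (eps n) m \<le> Gf (eps n) (x n)" using mm[of n] mm_iff[OF epos[of n]] by blast
    moreover have "\<bar>x n - m\<bar> \<ge> delta \<Longrightarrow> Gf (eps n) (x n) < Gf (eps n) m"
      using e0(2) n epos[of n] by blast
    ultimately have "\<not> \<bar>x n - m\<bar> \<ge> delta" by linarith
    then show "dist (x n) m < delta" by (simp add: dist_real_def)
  qed
qed

lemma mode_lemma:
  assumes sep: "\<And>d. d > 0 \<Longrightarrow> \<exists>s<f m. \<forall>x. \<bar>x - m\<bar> \<ge> d \<longrightarrow> f x \<le> s" and lohi: "lo \<le> hi"
  shows "unimodal Mf" "mode Mf = m"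
proof -
  define eps where "eps n = inverse (real (Suc n))" for n
  have epos: "\<And>n. eps n > 0" by (simp add: eps_def)
  have elim: "eps \<longlonglongrightarrow> 0" unfolding eps_def by (rule LIMSEQ_inverse_real_of_nat)
  define x where "x n = (SOME z. modal_midpoint Mf (eps n) z)" for n
  have mm: "\<And>n. modal_midpoint Mf (eps n) (x n)"
    unfolding x_def using mm_exists[OF epos lohi] by (rule someI_ex)
  have ism: "is_mode Mf m"
    unfolding is_mode_def using epos elim mm conv_lemma[OF sep epos elim mm] by blast
  have uniq: "m' = m" if ism': "is_mode Mf m'" for m'
  proof -
    obtain e z where ez: "\<forall>n. e n > 0" "e \<longlonglongrightarrow> 0" "\<forall>n. modal_midpoint Mf (e n) (z n)" "z \<longlonglongrightarrow> m'"
      using ism' unfolding is_mode_def by blast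
    have "z \<longlonglongrightarrow> m" using conv_lemma[OF sep] ez by blast
    then show ?thesis using ez(4) LIMSEQ_unique by blast
  qed
  show "unimodal Mf" unfolding unimodal_def using ism uniq by blast
  show "mode Mf = m" unfolding mode_def using ism uniq by blast
qed

end


definition psi :: "real \<Rightarrow> real" where "psi = B [:1:] 0"

lemma psi_eq: "psi x = (if \<bar>x\<bar> < 1 then exp (- (1 / (1 - x\<^sup>2))) else 0)"
  by (simp add: psi_def B_def)

lemma psi_nn: "psi x \<ge> 0" by (simp add: psi_eq)

lemma psi_0: "psi 0 = exp (- 1)" by (simp add: psi_eq)

lemma psi_out: "\<bar>x\<bar> \<ge> 1 \<Longrightarrow> psi x = 0" by (simp add: psi_eq)

lemma psi_le: "psi x \<le> exp (- 1)"
proof (cases "\<bar>x\<bar> < 1")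
  case True
  then have q: "0 < 1 - x\<^sup>2" "1 - x\<^sup>2 \<le> 1" by (simp_all add: abs_square_less_1)
  then have "1 \<le> 1 / (1 - x\<^sup>2)" by (simp add: field_simps)
  then show ?thesis using True by (simp add: psi_eq)
qed (simp add: psi_eq)

lemma psi_mono: assumes "0 < d" "d < 1" "\<bar>x\<bar> \<ge> d" shows "psi x \<le> psi d"
proof (cases "\<bar>x\<bar> < 1")
  case True
  have "d\<^sup>2 \<le> x\<^sup>2" using assms by (metis abs_le_square_iff abs_of_pos)
  moreover have "x\<^sup>2 < 1" using True by (simp add: abs_square_less_1)
  ultimately have "1 / (1 - d\<^sup>2) \<le> 1 / (1 - x\<^sup>2)" by (intro divide_left_mono) auto
  then show ?thesis using True assms by (simp add: psi_eq)
qed (use assms in \<open>simp add: psi_eq\<close>)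

lemma psi_lt: assumes "0 < d" "d < 1" shows "psi d < exp (- 1)"
proof -
  have "0 < 1 - d\<^sup>2" "1 - d\<^sup>2 < 1" using assms by (simp_all add: power_less_one_iff abs_square_less_1)
  then have "1 < 1 / (1 - d\<^sup>2)" by (simp add: field_simps)
  then show ?thesis using assms by (simp add: psi_eq)
qed

lemma psi_smooth: "smooth psi" unfolding psi_def by (rule smooth_B)

lemma psi_cont: "isCont psi x"
  unfolding psi_def using B_deriv by (rule DERIV_isCont)

lemma psi_int: "integrable lborel psi"
proof -
  have "integrable lborel (\<lambda>x. indicator {-1..1} x *\<^sub>R psi x)"
    by (rule borel_integrable_compact) (auto intro!: continuous_at_imp_continuous_on psi_cont)
  moreover have "(\<lambda>x. indicator {-1..1} x *\<^sub>R psi x) = psi"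
    by (rule ext) (auto simp: psi_out split: split_indicator)
  ultimately show ?thesis by simp
qed

lemma psi_meas[measurable]: "psi \<in> borel_measurable borel"
  using borel_measurable_integrable[OF psi_int] by simp

definition "Z = (\<integral>x. psi x \<partial>lborel)"

lemma Z_pos: "Z > 0"
proof -
  have le: "indicator {-1/2<..1/2::real} x * psi (1/2) \<le> psi x" for x
  proof (cases "\<bar>x\<bar> \<le> 1/2")
    case True
    have "\<bar>x\<bar>\<^sup>2 \<le> (1/2)\<^sup>2" using True by (intro power_mono) auto
    then have "x\<^sup>2 \<le> (1/2)\<^sup>2" by simp
    then have "1 / (1 - (1/2::real)\<^sup>2) \<ge> 1 / (1 - x\<^sup>2)" by (intro divide_left_mono) (auto simp: power2_eq_square)
    then have "psi (1/2) \<le> psi x" using True by (simp add: psi_eq)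
    then show ?thesis using True psi_nn[of x] by (auto split: split_indicator)
  next
    case False
    then show ?thesis using psi_nn[of x] by (auto split: split_indicator)
  qed
  have "(\<integral>x. indicator {-1/2<..1/2::real} x * psi (1/2) \<partial>lborel) \<le> Z"
    unfolding Z_def
    by (intro integral_mono psi_int integrable_mult_left integrable_real_indicator le) auto
  moreover have "(\<integral>x. indicator {-1/2<..1/2::real} x * psi (1/2) \<partial>lborel) = psi (1/2)" by simp
  moreover have "psi (1/2) > 0" by (simp add: psi_eq)
  ultimately show ?thesis by simp
qed

lemma psi_shift_int: "integrable lborel (\<lambda>x. psi (x - c))"
  using lborel_integrable_real_affine[OF psi_int, of 1 "- c"] by simp

lemma psi_shift_Z: "(\<integral>x. psi (x - c) \<partial>lborel) = Z"
  using lborel_integral_real_affine[of 1 psi "- c"] by (simp add: Z_def)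

definition "fd a b x = a * psi x + b * psi (x - 10)"

lemma fd_int: "integrable lborel (fd a b)"
proof -
  have "integrable lborel (\<lambda>x. a * psi x)" using psi_int by simp
  moreover have "integrable lborel (\<lambda>x. b * psi (x - 10))" using psi_shift_int[of 10] by simp
  ultimately show ?thesis unfolding fd_def[abs_def] by (rule Bochner_Integration.integrable_add)
qed

lemma fd_integral: "(\<integral>x. fd a b x \<partial>lborel) = a * Z + b * Z"
  unfolding fd_def using psi_int psi_shift_int[of 10] psi_shift_Z[of 10]
  by (simp add: Z_def)

lemma fd_cont: "isCont (fd a b) x"
  unfolding fd_def
  by (intro continuous_intros psi_cont continuous_at_compose[where f="\<lambda>x. x - 10" and g=psi, unfolded o_def])

lemma fd_nn: "0 \<le> a \<Longrightarrow> 0 \<le> b \<Longrightarrow> fd a b x \<ge> 0"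
  unfolding fd_def using psi_nn by (simp add: add_nonneg_nonneg)

lemma fd_supp: "x < -1 \<or> 11 < x \<Longrightarrow> fd a b x = 0"
  unfolding fd_def by (auto simp: psi_out)

lemma fd_smooth: "smooth (fd a b)"
  unfolding fd_def[abs_def] by (intro smooth_lin psi_smooth smooth_shift)

lemma fd_bounded: "0 \<le> a \<Longrightarrow> 0 \<le> b \<Longrightarrow> bounded (range (fd a b))"
  unfolding bounded_iff
proof (intro exI[of _ "a * exp (- 1) + b * exp (- 1)"] ballI)
  fix y assume "0 \<le> a" "0 \<le> b" "y \<in> range (fd a b)"
  then obtain x where x: "y = fd a b x" by auto
  have "fd a b x \<le> a * exp (- 1) + b * exp (- 1)"
    unfolding fd_def using \<open>0 \<le> a\<close> \<open>0 \<le> b\<close> psi_le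
    by (intro add_mono mult_left_mono) auto
  then show "norm y \<le> a * exp (- 1) + b * exp (- 1)"
    using x fd_nn[OF \<open>0 \<le> a\<close> \<open>0 \<le> b\<close>, of x] by simp
qed

lemma fd_sep0: assumes "b < a" "0 \<le> b" "d > 0"
  shows "\<exists>s<fd a b 0. \<forall>x. \<bar>x - 0\<bar> \<ge> d \<longrightarrow> fd a b x \<le> s"
proof -
  define d' where "d' = min d (1/2)"
  have d': "0 < d'" "d' < 1" "d' \<le> d" using assms by (auto simp: d'_def)
  have f0: "fd a b 0 = a * exp (- 1)" by (simp add: fd_def psi_0 psi_out)
  show ?thesis
  proof (intro exI[of _ "max (a * psi d') (b * exp (- 1))"] conjI allI impI)
    show "max (a * psi d') (b * exp (- 1)) < fd a b 0"
      using psi_lt[OF d'(1,2)] assms unfolding f0 by auto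
    fix x assume x: "\<bar>x - 0\<bar> \<ge> d"
    show "fd a b x \<le> max (a * psi d') (b * exp (- 1))"
    proof (cases "\<bar>x\<bar> < 1")
      case True
      then have "psi (x - 10) = 0" by (intro psi_out) auto
      moreover have "psi x \<le> psi d'" using psi_mono[OF d'(1,2)] x d'(3) by simp
      then have "a * psi x \<le> a * psi d'" using assms by (intro mult_left_mono) auto
      ultimately show ?thesis unfolding fd_def by simp
    next
      case False
      then have "psi x = 0" by (intro psi_out) auto
      moreover have "b * psi (x - 10) \<le> b * exp (- 1)" using assms psi_le[of "x - 10"] by (intro mult_left_mono) auto
      ultimately show ?thesis unfolding fd_def by simp
    qed
  qed
qed

lemma fd_sep10: assumes "a < b" "0 \<le> a" "d > 0"
  shows "\<exists>s<fd a b 10. \<forall>x. \<bar>x - 10\<bar> \<ge> d \<longrightarrow> fd a b x \<le> s"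
proof -
  define d' where "d' = min d (1/2)"
  have d': "0 < d'" "d' < 1" "d' \<le> d" using assms by (auto simp: d'_def)
  have f0: "fd a b 10 = b * exp (- 1)" by (simp add: fd_def psi_0 psi_out)
  show ?thesis
  proof (intro exI[of _ "max (b * psi d') (a * exp (- 1))"] conjI allI impI)
    show "max (b * psi d') (a * exp (- 1)) < fd a b 10"
      using psi_lt[OF d'(1,2)] assms unfolding f0 by auto
    fix x assume x: "\<bar>x - 10\<bar> \<ge> d"
    show "fd a b x \<le> max (b * psi d') (a * exp (- 1))"
    proof (cases "\<bar>x - 10\<bar> < 1")
      case True
      then have "psi x = 0" by (intro psi_out) auto
      moreover have "psi (x - 10) \<le> psi d'" using psi_mono[OF d'(1,2)] x d'(3) by simp
      then have "b * psi (x - 10) \<le> b * psi d'" using assms by (intro mult_left_mono) auto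
      ultimately show ?thesis unfolding fd_def by simp
    next
      case False
      then have "psi (x - 10) = 0" by (intro psi_out) auto
      moreover have "a * psi x \<le> a * exp (- 1)" using assms psi_le[of x] by (intro mult_left_mono) auto
      ultimately show ?thesis unfolding fd_def by simp
    qed
  qed
qed

lemma fd_classP:
  assumes ab: "0 \<le> a" "0 \<le> b" "a * Z + b * Z = 1" and m: "\<And>d. d > 0 \<Longrightarrow> \<exists>s<fd a b m. \<forall>x. \<bar>x - m\<bar> \<ge> d \<longrightarrow> fd a b x \<le> s"
  shows "density lborel (\<lambda>x. ennreal (fd a b x)) \<in> class_P"
    "mode (density lborel (\<lambda>x. ennreal (fd a b x))) = m"
proof -
  have c: "\<And>x. isCont (fd a b) x" by (rule fd_cont)
  have n: "\<And>x. fd a b x \<ge> 0" using fd_nn ab by blast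
  have s: "\<And>x. x < -1 \<or> 11 < x \<Longrightarrow> fd a b x = 0" by (rule fd_supp)
  have i: "integrable lborel (fd a b)" by (rule fd_int)
  have i1: "integral\<^sup>L lborel (fd a b) = 1" using fd_integral ab by simp
  note U = mode_lemma[where f="fd a b" and lo="-1" and hi=11, OF c n s i i1 m]
  show "mode (density lborel (\<lambda>x. ennreal (fd a b x))) = m" using U by simp
  show "density lborel (\<lambda>x. ennreal (fd a b x)) \<in> class_P"
    unfolding class_P_def
  proof (intro CollectI conjI exI[of _ "fd a b"])
    show "prob_space (density lborel (\<lambda>x. ennreal (fd a b x)))"
      by (rule prob_Mf[where f="fd a b" and lo="-1" and hi=11, OF c n s i i1])
    show "unimodal (density lborel (\<lambda>x. ennreal (fd a b x)))" using U by simp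
    show "smooth (fd a b)" by (rule fd_smooth)
    show "bounded (range (fd a b))" by (rule fd_bounded[OF ab(1,2)])
    show "\<forall>x. 0 \<le> fd a b x" using n by blast
  qed auto
qed

lemma int_density_eq:
  assumes "0 \<le> a" "0 \<le> b" and gm: "g \<in> borel_measurable borel"
  shows "integrable (density lborel (\<lambda>x. ennreal (fd a b x))) g \<longleftrightarrow> integrable lborel (\<lambda>x. fd a b x * g x)"
    and "(\<integral>x. g x \<partial>density lborel (\<lambda>x. ennreal (fd a b x))) = (\<integral>x. fd a b x * g x \<partial>lborel)"
proof -
  have fm: "fd a b \<in> borel_measurable borel" using borel_measurable_integrable[OF fd_int] by simp
  have nn: "AE x in lborel. 0 \<le> fd a b x" using fd_nn[OF assms(1,2)] by simp
  show "integrable (density lborel (\<lambda>x. ennreal (fd a b x))) g \<longleftrightarrow> integrable lborel (\<lambda>x. fd a b x * g x)"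
    using integrable_density[of g lborel "fd a b"] fm nn gm by simp
  show "(\<integral>x. g x \<partial>density lborel (\<lambda>x. ennreal (fd a b x))) = (\<integral>x. fd a b x * g x \<partial>lborel)"
    using integral_density[of g lborel "fd a b"] fm nn gm by simp
qed

theorem lemma1:
  shows "\<not> (\<exists>V :: real \<Rightarrow> real \<Rightarrow> real. \<forall>M \<in> class_P. \<forall>r :: real.
            mode M = r \<longleftrightarrow> (integrable M (V r) \<and> (\<integral>y. V r y \<partial>M) = 0))"
proof
  assume "\<exists>V :: real \<Rightarrow> real \<Rightarrow> real. \<forall>M \<in> class_P. \<forall>r :: real.
            mode M = r \<longleftrightarrow> (integrable M (V r) \<and> (\<integral>y. V r y \<partial>M) = 0)"
  then obtain V :: "real \<Rightarrow> real \<Rightarrow> real" where V0: "\<forall>M \<in> class_P. \<forall>r :: real.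
            mode M = r \<longleftrightarrow> (integrable M (V r) \<and> (\<integral>y. V r y \<partial>M) = 0)" by (rule exE)
  have V: "mode M = r \<longleftrightarrow> (integrable M (V r) \<and> (\<integral>y. V r y \<partial>M) = 0)" if "M \<in> class_P" for M r
    using bspec[OF V0 that] by (rule spec)
  have Z: "Z > 0" by (rule Z_pos)
  define a1 where "a1 = 3 / (4 * Z)"
  define b1 where "b1 = 1 / (4 * Z)"
  define a2 where "a2 = 2 / (3 * Z)"
  define b2 where "b2 = 1 / (3 * Z)"
  define a3 where "a3 = 1 / (4 * Z)"
  define b3 where "b3 = 3 / (4 * Z)"
  have p: "0 \<le> a1" "0 \<le> b1" "0 \<le> a2" "0 \<le> b2" "0 \<le> a3" "0 \<le> b3"
    using Z by (simp_all add: a1_def b1_def a2_def b2_def a3_def b3_def)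
  have q: "b1 < a1" "b2 < a2" "a3 < b3"
    using Z by (simp_all add: a1_def b1_def a2_def b2_def a3_def b3_def divide_strict_right_mono)
  have n: "a1 * Z + b1 * Z = 1" "a2 * Z + b2 * Z = 1" "a3 * Z + b3 * Z = 1"
    using Z by (simp_all add: a1_def b1_def a2_def b2_def a3_def b3_def field_simps)
  define M1 where "M1 = density lborel (\<lambda>x. ennreal (fd a1 b1 x))"
  define M2 where "M2 = density lborel (\<lambda>x. ennreal (fd a2 b2 x))"
  define M3 where "M3 = density lborel (\<lambda>x. ennreal (fd a3 b3 x))"
  note c1 = fd_classP[OF p(1,2) n(1) fd_sep0[OF q(1) p(2)], folded M1_def]
  note c2 = fd_classP[OF p(3,4) n(2) fd_sep0[OF q(2) p(4)], folded M2_def]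
  note c3 = fd_classP[OF p(5,6) n(3) fd_sep10[OF q(3) p(5)], folded M3_def]
  have i1: "integrable M1 (V 0) \<and> (\<integral>y. V 0 y \<partial>M1) = 0" using V[OF c1(1), of 0] c1(2) by blast
  have i2: "integrable M2 (V 0) \<and> (\<integral>y. V 0 y \<partial>M2) = 0" using V[OF c2(1), of 0] c2(2) by blast
  have meas: "V 0 \<in> borel_measurable borel"
    using borel_measurable_integrable[of M1 "V 0"] i1 by (simp add: M1_def measurable_def)
  have j1: "integrable lborel (\<lambda>x. fd a1 b1 x * V 0 x)" "(\<integral>x. fd a1 b1 x * V 0 x \<partial>lborel) = 0"
    using i1 int_density_eq[OF p(1,2) meas] unfolding M1_def by auto
  have j2: "integrable lborel (\<lambda>x. fd a2 b2 x * V 0 x)" "(\<integral>x. fd a2 b2 x * V 0 x \<partial>lborel) = 0"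
    using i2 int_density_eq[OF p(3,4) meas] unfolding M2_def by auto
  have lin0: "a3 = 6 * a2 - 5 * a1" "b3 = 6 * b2 - 5 * b1"
    using Z by (simp_all add: a1_def b1_def a2_def b2_def a3_def b3_def field_simps)
  have lin: "(\<lambda>x. fd a3 b3 x * V 0 x) = (\<lambda>x. 6 * (fd a2 b2 x * V 0 x) - 5 * (fd a1 b1 x * V 0 x))"
    by (rule ext) (simp add: fd_def lin0 algebra_simps)
  have j3: "integrable lborel (\<lambda>x. fd a3 b3 x * V 0 x)" "(\<integral>x. fd a3 b3 x * V 0 x \<partial>lborel) = 0"
    unfolding lin using j1 j2 by simp_all
  have "integrable M3 (V 0) \<and> (\<integral>y. V 0 y \<partial>M3) = 0"
    using j3 int_density_eq[OF p(5,6) meas] unfolding M3_def by auto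
  then have "mode M3 = 0" using V[OF c3(1), of 0] by blast
  then show False using c3(2) by simp
qed

end
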